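(* Assume Assumption 1 (stated in the context). Let $\theta^0$, $D^3_\theta$ and $\epsilon_9>0$ be as in the context. Then there is a positive constant $\epsilon_{12}$ such that for every triple $(i,j,k)$ and every $t\in[0,T]$ one of the following holds: $$\text{dist}(b_{ij}(t,\theta^0),o_k)-d_0>\epsilon_{12},$$ or $$\text{dist}(b_{ij}(t,\theta^0),o_k)-d_0\le\epsilon_{12}\ \text{ and }\ \langle D^3_\theta,\nabla_\theta\text{dist}(b_{ij}(t,\theta^0),o_k)\rangle\ge\frac{\epsilon_9}{2}.$$
   Context: For a finite-dimensional parameter vector $\theta$ and $t\in[0,T]$, robot pieces $b_{ij}(t,\theta)\subset\mathbb{R}^3$ and obstacle pieces $o_k\subset\mathbb{R}^3$ are given; $\text{dist}$ is the shortest Euclidean distance between sets; $d_0\ge0$; $\mathcal{O}(\theta)$ is a differentiable cost. Assumption 1: the index set of triples $(i,j,k)$ is finite and each $(t,\theta)\mapsto\text{dist}(b_{ij}(t,\theta),o_k)$ is sufficiently smooth. $\theta^0$ is a parameter vector, and $D^3_\theta$ is a direction with positive constants $\epsilon_8,\epsilon_9$ such that $\langle D^3_\theta,\nabla_\theta\mathcal{O}(\theta^0)\rangle<-\epsilon_8$ and $\langle D^3_\theta,\nabla_\theta\text{dist}(b_{ij}(t,\theta^0),o_k)\rangle>\epsilon_9$ for all $(i,j,k,t)$ with $\text{dist}(b_{ij}(t,\theta^0),o_k)=d_0$. (Such a direction exists when the generalized Mangasarian–Fromovitz constraint qualification holds at $\theta^0$ and the first-order optimality condition fails there.) *)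

theory Defs
  imports "HOL-Analysis.Analysis"
begin

definition grad :: "('a::euclidean_space \<Rightarrow> real) \<Rightarrow> 'a \<Rightarrow> 'a" where
  "grad f x = (THE v. (f has_derivative (\<lambda>h. v \<bullet> h)) (at x))"

end

theory Submission
  imports Defs
begin

lemma one_triple:
  fixes f g :: "real \<Rightarrow> real" and S :: "real set"
  assumes S: "compact S" and cf: "continuous_on S f" and cg: "continuous_on S g"
    and ge: "\<forall>t\<in>S. f t \<ge> d0" and eq: "\<forall>t\<in>S. f t = d0 \<longrightarrow> g t > c"
  shows "\<exists>e>0. \<forall>e'. 0 < e' \<and> e' \<le> e \<longrightarrow> (\<forall>t\<in>S. f t - d0 > e' \<or> (f t - d0 \<le> e' \<and> g t \<ge> c))"
proof -
  define K where "K = {t\<in>S. g t \<le> c}"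
  have "closed K" unfolding K_def
    by (rule continuous_on_closed_Collect_le[OF cg continuous_on_const compact_imp_closed[OF S]])
  moreover have "K = S \<inter> K" unfolding K_def by blast
  ultimately have cK: "compact K" using compact_Int_closed[OF S, of K] by simp
  show ?thesis
  proof (cases "K = {}")
    case True
    have "\<forall>t\<in>S. g t \<ge> c"
    proof
      fix t assume "t \<in> S"
      show "g t \<ge> c"
      proof (rule ccontr)
        assume "\<not> g t \<ge> c"
        hence "t \<in> K" unfolding K_def using \<open>t \<in> S\<close> by simp
        thus False using True by simp
      qed
    qed
    then show ?thesis by (intro exI[of _ 1]) auto
  next
    case False
    have cfK: "continuous_on K f" using cf unfolding K_def by (rule continuous_on_subset) blast
    obtain x where x: "x \<in> K" "\<forall>y\<in>K. f x \<le> f y"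
      using continuous_attains_inf[OF cK False cfK] by blast
    have xS: "x \<in> S" "g x \<le> c" using x(1) unfolding K_def by auto
    have "f x \<noteq> d0" using eq xS by force
    hence fx: "f x > d0" using ge xS by force
    have key: "g t \<ge> c" if "t \<in> S" "f t - d0 < f x - d0" for t
    proof (rule ccontr)
      assume "\<not> g t \<ge> c"
      hence "t \<in> K" unfolding K_def using that by simp
      thus False using x(2) that by force
    qed
    show ?thesis
    proof (rule exI[of _ "(f x - d0)/2"], intro conjI allI impI ballI)
      show "0 < (f x - d0) / 2" using fx by simp
      fix e' t assume e': "0 < e' \<and> e' \<le> (f x - d0) / 2" and t: "t \<in> S"
      show "e' < f t - d0 \<or> f t - d0 \<le> e' \<and> c \<le> g t"
      proof (cases "e' < f t - d0")
        case False
        hence "f t - d0 < f x - d0" using e' fx by (simp add: field_simps)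
        then show ?thesis using key[OF t] False by simp
      qed simp
    qed
  qed
qed

lemma fin_combine:
  assumes "finite I" "\<forall>x\<in>I. \<exists>e>(0::real). \<forall>e'. 0 < e' \<and> e' \<le> e \<longrightarrow> P x e'"
  shows "\<exists>e>0. \<forall>x\<in>I. \<forall>e'. 0 < e' \<and> e' \<le> e \<longrightarrow> P x e'"
  using assms
proof (induction I rule: finite_induct)
  case empty
  then show ?case by (intro exI[of _ 1]) auto
next
  case (insert y F)
  from insert.IH insert.prems obtain e1 where e1: "e1 > 0" "\<forall>x\<in>F. \<forall>e'. 0 < e' \<and> e' \<le> e1 \<longrightarrow> P x e'"
    by blast
  obtain e2 where e2: "e2 > 0" "\<forall>e'. 0 < e' \<and> e' \<le> e2 \<longrightarrow> P y e'"
    using insert.prems by blast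
  show ?case
    by (rule exI[of _ "min e1 e2"]) (use e1 e2 in auto)
qed

theorem lemma9:
  fixes b :: "'i \<Rightarrow> 'j \<Rightarrow> real \<Rightarrow> 'p::euclidean_space \<Rightarrow> (real^3) set"
    and obs :: "'k \<Rightarrow> (real^3) set"
    and I :: "('i \<times> 'j \<times> 'k) set"
    and T d0 \<epsilon>8 \<epsilon>9 :: real
    and \<O> :: "'p \<Rightarrow> real"
    and \<theta>0 D :: 'p
  assumes finI: "finite I"
    and d0: "d0 \<ge> 0"
    and cont: "\<forall>(i,j,k)\<in>I. continuous_on ({0..T} \<times> UNIV)
                 (\<lambda>(t,\<theta>). setdist (b i j t \<theta>) (obs k))"
    and diff: "\<forall>(i,j,k)\<in>I. \<forall>t\<in>{0..T}. \<forall>\<theta>.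
                 (\<lambda>\<theta>'. setdist (b i j t \<theta>') (obs k)) differentiable (at \<theta>)"
    and grad_cont: "\<forall>(i,j,k)\<in>I. continuous_on ({0..T} \<times> UNIV)
                 (\<lambda>(t,\<theta>). grad (\<lambda>\<theta>'. setdist (b i j t \<theta>') (obs k)) \<theta>)"
    and O_diff: "\<O> differentiable (at \<theta>0)"
    and feas: "\<forall>(i,j,k)\<in>I. \<forall>t\<in>{0..T}. setdist (b i j t \<theta>0) (obs k) \<ge> d0"
    and e8: "\<epsilon>8 > 0" and e9: "\<epsilon>9 > 0"
    and descent: "D \<bullet> grad \<O> \<theta>0 < - \<epsilon>8"
    and mfcq: "\<forall>(i,j,k)\<in>I. \<forall>t\<in>{0..T}. setdist (b i j t \<theta>0) (obs k) = d0 \<longrightarrow>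
                 D \<bullet> grad (\<lambda>\<theta>. setdist (b i j t \<theta>) (obs k)) \<theta>0 > \<epsilon>9"
  shows "\<exists>\<epsilon>12>0. \<forall>(i,j,k)\<in>I. \<forall>t\<in>{0..T}.
           setdist (b i j t \<theta>0) (obs k) - d0 > \<epsilon>12 \<or>
           (setdist (b i j t \<theta>0) (obs k) - d0 \<le> \<epsilon>12 \<and>
            D \<bullet> grad (\<lambda>\<theta>. setdist (b i j t \<theta>) (obs k)) \<theta>0 \<ge> \<epsilon>9 / 2)"
proof -
  have pair: "continuous_on {0..T} (\<lambda>t::real. (t, \<theta>0))"
    by (intro continuous_intros)
  have img: "(\<lambda>t::real. (t, \<theta>0)) ` {0..T} \<subseteq> {0..T} \<times> UNIV" by auto
  have each: "\<exists>e>0. \<forall>e'. 0 < e' \<and> e' \<le> e \<longrightarrow> (\<forall>t\<in>{0..T}.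
           setdist (b i j t \<theta>0) (obs k) - d0 > e' \<or>
           (setdist (b i j t \<theta>0) (obs k) - d0 \<le> e' \<and>
            D \<bullet> grad (\<lambda>\<theta>. setdist (b i j t \<theta>) (obs k)) \<theta>0 \<ge> \<epsilon>9 / 2))"
    if ijk: "(i,j,k) \<in> I" for i j k
  proof -
    have c1: "continuous_on ({0..T} \<times> UNIV) (\<lambda>(t,\<theta>). setdist (b i j t \<theta>) (obs k))"
      using cont ijk by blast
    have c2: "continuous_on ({0..T} \<times> UNIV) (\<lambda>(t,\<theta>). grad (\<lambda>\<theta>'. setdist (b i j t \<theta>') (obs k)) \<theta>)"
      using grad_cont ijk by blast
    have cf: "continuous_on {0..T} (\<lambda>t. setdist (b i j t \<theta>0) (obs k))"
      using continuous_on_compose2[OF c1 pair img] by simp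
    have cg0: "continuous_on {0..T} (\<lambda>t. grad (\<lambda>\<theta>'. setdist (b i j t \<theta>') (obs k)) \<theta>0)"
      using continuous_on_compose2[OF c2 pair img] by simp
    have cg: "continuous_on {0..T} (\<lambda>t. D \<bullet> grad (\<lambda>\<theta>'. setdist (b i j t \<theta>') (obs k)) \<theta>0)"
      by (intro continuous_on_inner continuous_on_const cg0)
    show ?thesis
    proof (rule one_triple[OF compact_Icc cf cg])
      show "\<forall>t\<in>{0..T}. d0 \<le> setdist (b i j t \<theta>0) (obs k)"
        using bspec[OF feas ijk] by simp
      have m: "\<forall>t\<in>{0..T}. setdist (b i j t \<theta>0) (obs k) = d0 \<longrightarrow>
                 D \<bullet> grad (\<lambda>\<theta>. setdist (b i j t \<theta>) (obs k)) \<theta>0 > \<epsilon>9"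
        using bspec[OF mfcq ijk] by simp
      show "\<forall>t\<in>{0..T}. setdist (b i j t \<theta>0) (obs k) = d0 \<longrightarrow>
                 \<epsilon>9 / 2 < D \<bullet> grad (\<lambda>\<theta>. setdist (b i j t \<theta>) (obs k)) \<theta>0"
        using m e9 by force
    qed
  qed
  have "\<exists>e>0. \<forall>x\<in>I. \<forall>e'. 0 < e' \<and> e' \<le> e \<longrightarrow> (case x of (i,j,k) \<Rightarrow> \<forall>t\<in>{0..T}.
           setdist (b i j t \<theta>0) (obs k) - d0 > e' \<or>
           (setdist (b i j t \<theta>0) (obs k) - d0 \<le> e' \<and>
            D \<bullet> grad (\<lambda>\<theta>. setdist (b i j t \<theta>) (obs k)) \<theta>0 \<ge> \<epsilon>9 / 2))"
  proof (rule fin_combine[OF finI], rule ballI)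
    fix x assume x: "x \<in> I"
    obtain i j k where xe: "x = (i,j,k)" by (cases x)
    show "\<exists>e>0. \<forall>e'. 0 < e' \<and> e' \<le> e \<longrightarrow> (case x of (i,j,k) \<Rightarrow> \<forall>t\<in>{0..T}.
           setdist (b i j t \<theta>0) (obs k) - d0 > e' \<or>
           (setdist (b i j t \<theta>0) (obs k) - d0 \<le> e' \<and>
            D \<bullet> grad (\<lambda>\<theta>. setdist (b i j t \<theta>) (obs k)) \<theta>0 \<ge> \<epsilon>9 / 2))"
      using each[of i j k] x unfolding xe by simp
  qed
  then obtain e where "e > 0" "\<forall>x\<in>I. (case x of (i,j,k) \<Rightarrow> \<forall>t\<in>{0..T}.
           setdist (b i j t \<theta>0) (obs k) - d0 > e \<or>
           (setdist (b i j t \<theta>0) (obs k) - d0 \<le> e \<and>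
            D \<bullet> grad (\<lambda>\<theta>. setdist (b i j t \<theta>) (obs k)) \<theta>0 \<ge> \<epsilon>9 / 2))"
    by blast
  then show ?thesis by (intro exI[of _ e] conjI)
qed

end
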